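(* Let $n\geq 2$ and let $L_n$ be the graph of linear $[n]$-phenylene (defined in the context). Then the base polynomial counting distances between pairs of degree-3 vertices of $L_n$ is \begin{eqnarray*} H^{3,3}_{b}(L_{n}) &=& 4(n-1)x+6\sum_{k=2}^{n-1}(n-k)x^{3k-2}+2\sum_{k=1}^{n-1}(2n-2k-1)x^{3k-1}\\&&+6\sum_{k=1}^{n-2}(n-k-1)x^{3k}. \end{eqnarray*}
   Context: All graphs are finite, simple and connected; $d(u,v)$ denotes the shortest-path distance and $d_u$ the degree of a vertex $u$. For a graph $G$ and a degree $p$, the base polynomial is $H^{p,p}_{b}(G)=\sum x^{d(u,v)}$, where the sum runs over all unordered pairs $\{u,v\}$ of distinct vertices of $G$ both of degree $p$. Linear $[n]$-phenylene $L_n$: take $n$ hexagons $H_1,\dots,H_n$; hexagon $H_i$ is the 6-cycle $a_i b_i c_i d_i e_i f_i a_i$. For each $i=1,\dots,n-1$ add the two edges $b_i f_{i+1}$ and $c_i e_{i+1}$, so that $b_i c_i e_{i+1} f_{i+1}$ is a 4-cycle joining consecutive hexagons. Thus $L_n$ has $6n$ vertices, $2n+4$ of degree 2 and $4n-4$ of degree 3. *)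

theory Defs
  imports Main "HOL-Library.Product_Lexorder"
begin

definition walk :: "('v \<Rightarrow> 'v \<Rightarrow> bool) \<Rightarrow> 'v list \<Rightarrow> bool" where
  "walk E xs \<longleftrightarrow> xs \<noteq> [] \<and> (\<forall>i. Suc i < length xs \<longrightarrow> E (xs ! i) (xs ! Suc i))"

definition gdist :: "('v \<Rightarrow> 'v \<Rightarrow> bool) \<Rightarrow> 'v \<Rightarrow> 'v \<Rightarrow> nat" where
  "gdist E u v = (LEAST k. \<exists>xs. walk E xs \<and> hd xs = u \<and> last xs = v \<and> length xs = Suc k)"

definition degree :: "'v set \<Rightarrow> ('v \<Rightarrow> 'v \<Rightarrow> bool) \<Rightarrow> 'v \<Rightarrow> nat" where
  "degree V E u = card {v \<in> V. E u v}"

text \<open>Base polynomial H^{p,p}_b evaluated at x: sum over unordered pairs {u,v} of distinct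
  vertices of degree p (each unordered pair counted once via u < v) of x^d(u,v).\<close>
definition base_poly :: "'v::linorder set \<Rightarrow> ('v \<Rightarrow> 'v \<Rightarrow> bool) \<Rightarrow> nat \<Rightarrow> 'a::comm_ring_1 \<Rightarrow> 'a" where
  "base_poly V E p x = (\<Sum>(u, v) \<in> {(u, v). u \<in> V \<and> v \<in> V \<and> u < v \<and> degree V E u = p \<and> degree V E v = p}.
      x ^ gdist E u v)"

text \<open>Vertex (i, l): hexagon i \<in> {1..n}, letter l \<in> {0..5} standing for a,b,c,d,e,f.\<close>
definition phen_V :: "nat \<Rightarrow> (nat \<times> nat) set" where
  "phen_V n = {1..n} \<times> {0..<6}"

text \<open>Links b_i f_{i+1} and c_i e_{i+1}.\<close>
definition phen_link :: "nat \<times> nat \<Rightarrow> nat \<times> nat \<Rightarrow> bool" where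
  "phen_link u v \<longleftrightarrow> fst v = fst u + 1 \<and>
     ((snd u = 1 \<and> snd v = 5) \<or> (snd u = 2 \<and> snd v = 4))"

definition phen_E :: "nat \<Rightarrow> nat \<times> nat \<Rightarrow> nat \<times> nat \<Rightarrow> bool" where
  "phen_E n u v \<longleftrightarrow> u \<in> phen_V n \<and> v \<in> phen_V n \<and>
     ((fst u = fst v \<and> (snd v = (snd u + 1) mod 6 \<or> snd u = (snd v + 1) mod 6))
      \<or> phen_link u v \<or> phen_link v u)"

end

theory Submission
  imports Defs
begin


definition pos :: "nat \<times> nat \<Rightarrow> nat" where
  "pos v = 3 * fst v + (if snd v = 5 \<or> snd v = 4 then 0 else if snd v = 0 \<or> snd v = 3 then 1 else 2)"
definition upr :: "nat \<times> nat \<Rightarrow> bool" where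
  "upr v \<longleftrightarrow> snd v = 5 \<or> snd v = 0 \<or> snd v = 1"
definition pd :: "nat \<times> nat \<Rightarrow> nat \<times> nat \<Rightarrow> nat" where
  "pd u v = (pos u - pos v) + (pos v - pos u) +
     (if upr u = upr v then 0 else if pos u = pos v \<and> pos u mod 3 = 1 then 3 else 1)"

lemma walk_snoc:
  assumes "walk E ws" "E (last ws) v"
  shows "walk E (ws @ [v])"
  unfolding walk_def
proof (intro conjI allI impI)
  show "ws @ [v] \<noteq> []" by simp
  fix i assume i: "Suc i < length (ws @ [v])"
  show "E ((ws @ [v]) ! i) ((ws @ [v]) ! Suc i)"
  proof (cases "Suc i < length ws")
    case True then show ?thesis using assms(1) unfolding walk_def by (simp add: nth_append)
  next
    case False
    then have "Suc i = length ws" using i by simp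
    then have "ws ! i = last ws" using last_conv_nth[of ws] by (metis diff_Suc_1 length_0_conv nat.distinct(1))
    then show ?thesis using assms(2) \<open>Suc i = length ws\<close> by (simp add: nth_append)
  qed
qed

lemma walk_butlast:
  assumes "walk E (ys @ [z])" "ys \<noteq> []"
  shows "walk E ys \<and> E (last ys) z"
proof -
  have W: "\<And>i. Suc i < Suc (length ys) \<Longrightarrow> E ((ys @ [z]) ! i) ((ys @ [z]) ! Suc i)"
    using assms(1) unfolding walk_def by simp
  have 1: "walk E ys" unfolding walk_def
  proof (intro conjI allI impI)
    show "ys \<noteq> []" by fact
    fix i assume i: "Suc i < length ys"
    then show "E (ys ! i) (ys ! Suc i)" using W[of i] by (simp add: nth_append)
  qed
  obtain k where k: "length ys = Suc k" using assms(2) by (cases ys) auto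
  have "E ((ys@[z]) ! k) ((ys@[z]) ! Suc k)" using W[of k] k by simp
  then have "E (last ys) z" using k assms(2)
    by (simp add: nth_append last_conv_nth)
  with 1 show ?thesis by simp
qed

lemma walk_lower:
  assumes d0: "\<And>u. d u u = 0"
    and tri: "\<And>u v w. E v w \<Longrightarrow> d u w \<le> d u v + 1"
  shows "walk E xs \<Longrightarrow> d (hd xs) (last xs) \<le> length xs - 1"
proof (induction xs rule: rev_induct)
  case Nil then show ?case by (simp add: walk_def)
next
  case (snoc z ys)
  show ?case
  proof (cases "ys = []")
    case True then show ?thesis by (simp add: d0)
  next
    case False
    with walk_butlast[OF snoc.prems False] have "walk E ys" "E (last ys) z" by auto
    with snoc.IH have "d (hd ys) (last ys) \<le> length ys - 1" by simp
    moreover have "d (hd ys) z \<le> d (hd ys) (last ys) + 1" using tri \<open>E (last ys) z\<close> by blast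
    moreover have "length ys \<ge> 1" using False by (cases ys) auto
    ultimately show ?thesis using False by (simp add: hd_append)
  qed
qed

lemma walk_upper:
  assumes d0: "\<And>u. d u u = 0"
    and step: "\<And>v. v \<in> V \<Longrightarrow> v \<noteq> u \<Longrightarrow> \<exists>w\<in>V. E w v \<and> d u w + 1 = d u v"
    and u: "u \<in> V"
  shows "v \<in> V \<Longrightarrow> d u v = k \<Longrightarrow> \<exists>xs. walk E xs \<and> hd xs = u \<and> last xs = v \<and> length xs = Suc k"
proof (induction k arbitrary: v)
  case 0
  then have "v = u" using step by fastforce
  then show ?case by (intro exI[of _ "[u]"]) (simp add: walk_def)
next
  case (Suc k)
  then have "v \<noteq> u" using d0 by auto
  then obtain w where w: "w \<in> V" "E w v" "d u w + 1 = d u v" using step Suc.prems by blast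
  then obtain ws where ws: "walk E ws" "hd ws = u" "last ws = w" "length ws = Suc k"
    using Suc by auto
  show ?case
    apply (intro exI[of _ "ws @ [v]"])
    using ws w walk_snoc[of E ws v] by (auto simp: walk_def)
qed

lemma gdist_eq:
  assumes d0: "\<And>u. d u u = 0"
    and tri: "\<And>u v w. E v w \<Longrightarrow> d u w \<le> d u v + 1"
    and step: "\<And>v. v \<in> V \<Longrightarrow> v \<noteq> u \<Longrightarrow> \<exists>w\<in>V. E w v \<and> d u w + 1 = d u v"
    and u: "u \<in> V" and v: "v \<in> V"
  shows "gdist E u v = d u v"
  unfolding gdist_def
proof (rule Least_equality)
  show "\<exists>xs. walk E xs \<and> hd xs = u \<and> last xs = v \<and> length xs = Suc (d u v)"
    using walk_upper[of d V u E, OF d0 step u v] by blast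
next
  fix k assume "\<exists>xs. walk E xs \<and> hd xs = u \<and> last xs = v \<and> length xs = Suc k"
  then obtain xs where "walk E xs" "hd xs = u" "last xs = v" "length xs = Suc k" by blast
  then show "d u v \<le> k" using walk_lower[of d E xs, OF d0 tri] by auto
qed


lemma mod3_simps[simp]: "Suc (Suc (3*j)) mod 3 = 2" "Suc (3*j) mod 3 = 1" "(3*j) mod 3 = (0::nat)"
  "(3*j + 2) mod 3 = 2" "(3*j+1) mod 3 = 1"
  by presburger+

lemma six_cases: "(l::nat) < 6 \<Longrightarrow> l = 0 \<or> l = 1 \<or> l = 2 \<or> l = 3 \<or> l = 4 \<or> l = 5"
  by auto

lemma edge_char:
  assumes "phen_E n v w"
  shows "v \<in> phen_V n \<and> w \<in> phen_V n \<and>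
    ((upr v = upr w \<and> (pos w = pos v + 1 \<or> pos v = pos w + 1)) \<or>
     (upr v \<noteq> upr w \<and> pos v = pos w \<and> pos v mod 3 \<noteq> 1))"
proof -
  obtain i l j m where v: "v = (i,l)" and w: "w = (j,m)" by (cases v, cases w)
  have "l < 6" "m < 6" using assms by (auto simp: phen_E_def phen_V_def v w)
  then have L: "l = 0 \<or> l = 1 \<or> l = 2 \<or> l = 3 \<or> l = 4 \<or> l = 5"
    and M: "m = 0 \<or> m = 1 \<or> m = 2 \<or> m = 3 \<or> m = 4 \<or> m = 5" by auto
  have E: "phen_E n (i,l) (j,m)" using assms v w by simp
  have "(i,l) \<in> phen_V n \<and> (j,m) \<in> phen_V n" using E by (simp add: phen_E_def)
  moreover have "((upr (i,l) = upr (j,m) \<and> (pos (j,m) = pos (i,l) + 1 \<or> pos (i,l) = pos (j,m) + 1)) \<or>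
     (upr (i,l) \<noteq> upr (j,m) \<and> pos (i,l) = pos (j,m) \<and> pos (i,l) mod 3 \<noteq> 1))"
    using L M E by (elim disjE) (simp_all add: phen_E_def phen_link_def pos_def upr_def)
  ultimately show ?thesis using v w by simp
qed

lemma V_pos: "v \<in> phen_V n \<longleftrightarrow> snd v < 6 \<and> 3 \<le> pos v \<and> pos v \<le> 3*n+2"
proof (cases v)
  case (Pair i l)
  show ?thesis
  proof (cases "l < 6")
    case True
    then have L: "l = 0 \<or> l = 1 \<or> l = 2 \<or> l = 3 \<or> l = 4 \<or> l = 5" by auto
    then show ?thesis by (elim disjE) (auto simp: Pair phen_V_def pos_def)
  next
    case False then show ?thesis by (simp add: Pair phen_V_def)
  qed
qed

lemma pos_inj: "snd u < 6 \<Longrightarrow> snd v < 6 \<Longrightarrow> pos u = pos v \<Longrightarrow> upr u = upr v \<Longrightarrow> u = v"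
proof -
  assume a: "snd u < 6" "snd v < 6" "pos u = pos v" "upr u = upr v"
  obtain i l j m where v: "u = (i,l)" and w: "v = (j,m)" by (cases u, cases v)
  have L: "l = 0 \<or> l = 1 \<or> l = 2 \<or> l = 3 \<or> l = 4 \<or> l = 5"
    and M: "m = 0 \<or> m = 1 \<or> m = 2 \<or> m = 3 \<or> m = 4 \<or> m = 5" using a v w by auto
  have "pos (i,l) = pos (j,m)" "upr (i,l) = upr (j,m)" using a v w by auto
  then have "(i,l) = (j,m)" using L M apply (elim disjE) apply (simp_all add: pos_def upr_def) by presburger+
  then show ?thesis using v w by simp
qed

definition nxt :: "nat \<times> nat \<Rightarrow> nat \<times> nat" where
  "nxt v = (let i = fst v; l = snd v in
     if l = 5 then (i,0) else if l = 0 then (i,1) else if l = 1 then (i+1,5)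
     else if l = 4 then (i,3) else if l = 3 then (i,2) else (i+1,4))"
definition prt :: "nat \<times> nat \<Rightarrow> nat \<times> nat" where
  "prt v = (let i = fst v; l = snd v in
     if l = 5 then (i,4) else if l = 4 then (i,5) else if l = 1 then (i,2) else (i,1))"

lemma nxt_props:
  assumes "v \<in> phen_V n" "pos v < 3*n+2"
  shows "nxt v \<in> phen_V n \<and> phen_E n (nxt v) v \<and> pos (nxt v) = pos v + 1 \<and> upr (nxt v) = upr v"
proof -
  obtain i l where v: "v = (i,l)" by (cases v)
  have "l < 6" "1 \<le> i" "i \<le> n" using assms by (auto simp: phen_V_def v)
  then have L: "l = 0 \<or> l = 1 \<or> l = 2 \<or> l = 3 \<or> l = 4 \<or> l = 5" by auto
  show ?thesis using assms L \<open>1 \<le> i\<close> \<open>i \<le> n\<close> unfolding v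
    by (elim disjE) (auto simp: nxt_def phen_E_def phen_link_def phen_V_def pos_def upr_def)
qed

lemma prv_ex:
  assumes "v \<in> phen_V n" "pos v > 3"
  shows "\<exists>w. w \<in> phen_V n \<and> phen_E n w v \<and> pos w + 1 = pos v \<and> upr w = upr v"
proof -
  obtain i l where v: "v = (i,l)" by (cases v)
  have "l < 6" "1 \<le> i" "i \<le> n" using assms by (auto simp: phen_V_def v)
  then consider "l = 0" | "l = 1" | "l = 2" | "l = 3" | "l = 4" | "l = 5" by linarith
  then show ?thesis
  proof cases
    case 1 then show ?thesis using assms v by (intro exI[of _ "(i,5)"]) (auto simp: phen_E_def phen_link_def phen_V_def pos_def upr_def)
  next
    case 2 then show ?thesis using assms v by (intro exI[of _ "(i,0)"]) (auto simp: phen_E_def phen_link_def phen_V_def pos_def upr_def)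
  next
    case 3 then show ?thesis using assms v by (intro exI[of _ "(i,3)"]) (auto simp: phen_E_def phen_link_def phen_V_def pos_def upr_def)
  next
    case 4 then show ?thesis using assms v by (intro exI[of _ "(i,4)"]) (auto simp: phen_E_def phen_link_def phen_V_def pos_def upr_def)
  next
    case 5 then show ?thesis using assms v by (intro exI[of _ "(i-1,2)"]) (auto simp: phen_E_def phen_link_def phen_V_def pos_def upr_def)
  next
    case 6 then show ?thesis using assms v by (intro exI[of _ "(i-1,1)"]) (auto simp: phen_E_def phen_link_def phen_V_def pos_def upr_def)
  qed
qed

lemma prt_props:
  assumes "v \<in> phen_V n" "pos v mod 3 \<noteq> 1"
  shows "prt v \<in> phen_V n \<and> phen_E n (prt v) v \<and> pos (prt v) = pos v \<and> upr (prt v) \<noteq> upr v"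
proof -
  obtain i l where v: "v = (i,l)" by (cases v)
  have "l < 6" "1 \<le> i" "i \<le> n" using assms by (auto simp: phen_V_def v)
  then have L: "l = 0 \<or> l = 1 \<or> l = 2 \<or> l = 3 \<or> l = 4 \<or> l = 5" by auto
  show ?thesis using assms L \<open>1 \<le> i\<close> \<open>i \<le> n\<close> unfolding v
    by (elim disjE) (auto simp: prt_def phen_E_def phen_link_def phen_V_def pos_def upr_def)
qed

lemma tri_arith: fixes p q r :: nat and s t t' :: bool
 assumes "(t = t' \<and> (r = q+1 \<or> q = r+1)) \<or> (t \<noteq> t' \<and> q = r \<and> q mod 3 \<noteq> 1)"
 shows "(p - r) + (r - p) + (if s = t' then 0 else if p = r \<and> p mod 3 = 1 then 3 else 1) \<le> (p - q) + (q - p) + (if s = t then 0 else if p = q \<and> p mod 3 = 1 then 3 else 1) + 1"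
proof (cases "t = t'")
  case True
  then have qr: "r = q+1 \<or> q = r+1" using assms by auto
  show ?thesis
  proof (cases "s = t")
    case True then show ?thesis using qr \<open>t = t'\<close> by auto
  next
    case False
    have "(if p = q \<and> p mod 3 = 1 then 3 else 1) \<ge> (1::nat)" by simp
    moreover have "(if p = r \<and> p mod 3 = 1 then 3 else 1) \<le> (if p = r then 3 else (1::nat))" by simp
    ultimately show ?thesis using False \<open>t = t'\<close> qr by (cases "p = r") auto
  qed
next
  case False
  then have qr: "q = r" "q mod 3 \<noteq> 1" using assms by auto
  show ?thesis using False qr by (cases "s = t") auto
qed

lemma pd_refl: "pd u u = 0" by (simp add: pd_def)

lemma pd_tri: "phen_E n v w \<Longrightarrow> pd u w \<le> pd u v + 1"
  using edge_char[of n v w] tri_arith[of "upr v" "upr w" "pos w" "pos v" "pos u" "upr u"]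
  unfolding pd_def by blast

lemma pd_step:
  assumes u: "u \<in> phen_V n" and v: "v \<in> phen_V n" and uv: "v \<noteq> u"
  shows "\<exists>w\<in>phen_V n. phen_E n w v \<and> pd u w + 1 = pd u v"
proof -
  have pu: "3 \<le> pos u" "pos u \<le> 3*n+2" "snd u < 6" using u V_pos by auto
  have pv: "3 \<le> pos v" "pos v \<le> 3*n+2" "snd v < 6" using v V_pos by auto
  show ?thesis
  proof (cases "upr u = upr v")
    case True
    then have "pos u \<noteq> pos v" using pos_inj[of u v] pu pv uv by auto
    then consider "pos v > pos u" | "pos v < pos u" by linarith
    then show ?thesis
    proof cases
      case 1
      then obtain w where w: "w \<in> phen_V n" "phen_E n w v" "pos w + 1 = pos v" "upr w = upr v"
        using prv_ex[OF v] pu by auto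
      show ?thesis using w True 1 by (intro bexI[of _ w]) (auto simp: pd_def)
    next
      case 2
      then show ?thesis using nxt_props[OF v] True pu
        by (intro bexI[of _ "nxt v"]) (auto simp: pd_def)
    qed
  next
    case False
    show ?thesis
    proof (cases "pos v mod 3 = 1")
      case False
      then show ?thesis using prt_props[OF v False] \<open>upr u \<noteq> upr v\<close>
        by (intro bexI[of _ "prt v"]) (auto simp: pd_def)
    next
      case True
      consider "pos v > pos u" | "pos v < pos u" | "pos v = pos u" by linarith
      then show ?thesis
      proof cases
        case 1
        then obtain w where w: "w \<in> phen_V n" "phen_E n w v" "pos w + 1 = pos v" "upr w = upr v"
          using prv_ex[OF v] pu by auto
        have "pos w mod 3 \<noteq> 1" using w(3) True by presburger
        then show ?thesis using w \<open>upr u \<noteq> upr v\<close> 1 by (intro bexI[of _ w]) (auto simp: pd_def)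
      next
        case 2
        have lt: "pos v < 3*n+2" using 2 pu by linarith
        have "pos (nxt v) mod 3 \<noteq> 1" using nxt_props[OF v lt] True by presburger
        then show ?thesis using nxt_props[OF v lt] \<open>upr u \<noteq> upr v\<close> pu 2
          by (intro bexI[of _ "nxt v"]) (auto simp: pd_def)
      next
        case 3
        have lt: "pos v < 3*n+2" using pv True by presburger
        have "pos (nxt v) mod 3 \<noteq> 1" using nxt_props[OF v lt] True by presburger
        then show ?thesis using nxt_props[OF v lt] \<open>upr u \<noteq> upr v\<close> 3 True
          by (intro bexI[of _ "nxt v"]) (auto simp: pd_def)
      qed
    qed
  qed
qed

lemma gdist_pd:
  assumes u: "u \<in> phen_V n" and v: "v \<in> phen_V n"
  shows "gdist (phen_E n) u v = pd u v"
proof (rule gdist_eq[of pd "phen_E n" "phen_V n" u v])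
  show "\<And>u. pd u u = 0" by (rule pd_refl)
  show "\<And>u v w. phen_E n v w \<Longrightarrow> pd u w \<le> pd u v + 1" by (rule pd_tri)
  show "\<And>v. v \<in> phen_V n \<Longrightarrow> v \<noteq> u \<Longrightarrow> \<exists>w\<in>phen_V n. phen_E n w v \<and> pd u w + 1 = pd u v"
    by (rule pd_step[OF u])
qed (use u v in auto)



definition Dn :: "nat \<Rightarrow> (nat \<times> nat) set" where
  "Dn n = {(i,l). (l = 1 \<or> l = 2) \<and> 1 \<le> i \<and> i < n \<or> (l = 4 \<or> l = 5) \<and> 2 \<le> i \<and> i \<le> n}"

lemma nbrs:
  assumes "1 \<le> i" "i \<le> n" "l < 6"
  shows "{w \<in> phen_V n. phen_E n (i,l) w} =
    (if l = 0 then {(i,5),(i,1)} else if l = 3 then {(i,4),(i,2)}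
     else if l = 1 then {(i,0),(i,2)} \<union> (if i < n then {(i+1,5)} else {})
     else if l = 2 then {(i,1),(i,3)} \<union> (if i < n then {(i+1,4)} else {})
     else if l = 4 then {(i,3),(i,5)} \<union> (if 1 < i then {(i-1,2)} else {})
     else {(i,4),(i,0)} \<union> (if 1 < i then {(i-1,1)} else {}))"
proof (rule set_eqI)
  fix w :: "nat \<times> nat"
  obtain j m where w: "w = (j,m)" by (cases w)
  have L: "l = 0 \<or> l = 1 \<or> l = 2 \<or> l = 3 \<or> l = 4 \<or> l = 5" using assms by auto
  show "w \<in> {w \<in> phen_V n. phen_E n (i,l) w} \<longleftrightarrow> w \<in> (if l = 0 then {(i,5),(i,1)} else if l = 3 then {(i,4),(i,2)}
     else if l = 1 then {(i,0),(i,2)} \<union> (if i < n then {(i+1,5)} else {})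
     else if l = 2 then {(i,1),(i,3)} \<union> (if i < n then {(i+1,4)} else {})
     else if l = 4 then {(i,3),(i,5)} \<union> (if 1 < i then {(i-1,2)} else {})
     else {(i,4),(i,0)} \<union> (if 1 < i then {(i-1,1)} else {}))"
  proof (cases "m < 6")
    case True
    then have M: "m = 0 \<or> m = 1 \<or> m = 2 \<or> m = 3 \<or> m = 4 \<or> m = 5" by auto
    show ?thesis unfolding w using L M assms
      by (elim disjE) (auto simp: phen_E_def phen_link_def phen_V_def)
  next
    case False
    then show ?thesis unfolding w using L assms
      by (elim disjE) (auto simp: phen_E_def phen_link_def phen_V_def)
  qed
qed

lemma deg3: assumes "v \<in> phen_V n" shows "degree (phen_V n) (phen_E n) v = 3 \<longleftrightarrow> v \<in> Dn n"
proof -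
  obtain i l where v: "v = (i,l)" by (cases v)
  have a: "1 \<le> i" "i \<le> n" "l < 6" using assms v by (auto simp: phen_V_def)
  then have L: "l = 0 \<or> l = 1 \<or> l = 2 \<or> l = 3 \<or> l = 4 \<or> l = 5" by auto
  show ?thesis unfolding v degree_def nbrs[OF a] using L a
    by (elim disjE) (auto simp: Dn_def)
qed



fun Er :: "'a::comm_ring_1 \<Rightarrow> nat \<Rightarrow> 'a" where
  "Er x 0 = 0"
| "Er x (Suc m) = x^3 * Er x m + x^3 + x^2"

definition A :: "'a::comm_ring_1 \<Rightarrow> nat \<Rightarrow> nat \<Rightarrow> 'a" where
  "A x r j = (\<Sum>i<j. x^(3*i+r))"

lemma A_Suc: "A x r (Suc j) = A x r j + x^(3*j+r)" by (simp add: A_def)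

lemma A_mult: "x * A x r j = A x (Suc r) j"
  by (simp add: A_def sum_distrib_left power_Suc)

lemma Er_A: "Er x j = A x 3 j + A x 2 j"
proof (induction j)
  case 0 then show ?case by (simp add: A_def)
next
  case (Suc j)
  have "x^3 * A x 3 j + x^3 = A x 3 (Suc j)"
    by (induction j) (simp_all add: A_def algebra_simps power_add power2_eq_square)
  moreover have "x^3 * A x 2 j + x^2 = A x 2 (Suc j)"
    by (induction j) (simp_all add: A_def algebra_simps power_add power2_eq_square)
  moreover have "Er x (Suc j) = (x^3 * A x 3 j + x^3) + (x^3 * A x 2 j + x^2)"
    using Suc by (simp add: algebra_simps)
  ultimately show ?case by simp
qed

lemma A_shift: "A x 2 j + x^(3*j+2) = A x 5 j + x^2"
  by (induction j) (simp_all add: A_def algebra_simps power2_eq_square)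

lemma W_step:
  fixes f :: "nat \<Rightarrow> 'a::comm_ring_1"
  shows "(\<Sum>k=a..Suc m. of_nat (Suc (Suc m) - k) * f k) =
         (\<Sum>k=a..m. of_nat (Suc m - k) * f k) + (\<Sum>k=a..Suc m. f k)"
proof -
  have "(\<Sum>k=a..Suc m. of_nat (Suc (Suc m) - k) * f k) = (\<Sum>k=a..Suc m. of_nat (Suc m - k) * f k + f k)"
    by (rule sum.cong) (auto simp: Suc_diff_le algebra_simps)
  also have "\<dots> = (\<Sum>k=a..Suc m. of_nat (Suc m - k) * f k) + (\<Sum>k=a..Suc m. f k)"
    by (simp add: sum.distrib)
  also have "(\<Sum>k=a..Suc m. of_nat (Suc m - k) * f k) = (\<Sum>k=a..m. of_nat (Suc m - k) * f k)"
  proof (cases "a \<le> Suc m")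
    case True then show ?thesis by (simp add: sum.cl_ivl_Suc)
  next
    case False then show ?thesis by simp
  qed
  finally show ?thesis .
qed

lemma T2_step:
  fixes f :: "nat \<Rightarrow> 'a::comm_ring_1"
  shows "(\<Sum>k=1..Suc (Suc m). of_nat (2 * (m+3) - 2 * k - 1) * f k) =
         (\<Sum>k=1..Suc m. of_nat (2 * (m+2) - 2 * k - 1) * f k) + 2 * (\<Sum>k=1..Suc m. f k) + f (Suc (Suc m))"
proof -
  have "(\<Sum>k=1..Suc (Suc m). of_nat (2 * (m+3) - 2 * k - 1) * f k) =
     (\<Sum>k=1..Suc m. of_nat (2 * (m+3) - 2 * k - 1) * f k) + f (Suc (Suc m))"
    by (simp add: sum.cl_ivl_Suc)
  also have "(\<Sum>k=1..Suc m. of_nat (2 * (m+3) - 2 * k - 1) * f k) =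
      (\<Sum>k=1..Suc m. of_nat (2 * (m+2) - 2 * k - 1) * f k + 2 * f k)"
  proof (rule sum.cong)
    fix k assume "k \<in> {1..Suc m}"
    then have "2 * (m+3) - 2 * k - 1 = (2 * (m+2) - 2 * k - 1) + 2" by auto
    then show "of_nat (2 * (m+3) - 2 * k - 1) * f k = of_nat (2 * (m+2) - 2 * k - 1) * f k + 2 * f k"
      by (simp add: algebra_simps)
  qed simp
  finally show ?thesis by (simp add: sum.distrib sum_distrib_left)
qed

lemma reidx1: "(\<Sum>k=2..Suc (Suc m). x^(3*k-2)) = A x 4 (Suc m)"
proof (induction m)
  case 0 then show ?case by (simp add: A_def power2_eq_square)
next
  case (Suc m)
  have e: "3 * Suc (Suc (Suc m)) - 2 = 3 * Suc m + 4" by simp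
  show ?case using Suc by (simp only: sum.cl_ivl_Suc A_Suc e) simp
qed
lemma reidx2: "(\<Sum>k=1..Suc m. x^(3*k-1)) = A x 2 (Suc m)"
proof (induction m)
  case 0 then show ?case by (simp add: A_def power2_eq_square)
next
  case (Suc m)
  have e: "3 * Suc (Suc m) - 1 = 3 * Suc m + 2" by simp
  show ?case using Suc by (simp only: sum.cl_ivl_Suc A_Suc e) simp
qed
lemma reidx3: "(\<Sum>k=1..Suc m. x^(3*k)) = A x 3 (Suc m)"
proof (induction m)
  case 0 then show ?case by (simp add: A_def power2_eq_square)
next
  case (Suc m)
  have e: "3 * Suc (Suc m) = 3 * Suc m + 3" by simp
  show ?case using Suc by (simp only: sum.cl_ivl_Suc A_Suc e) simp
qed

definition RHS :: "'a::comm_ring_1 \<Rightarrow> nat \<Rightarrow> 'a" where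
  "RHS x n = of_nat (4 * (n - 1)) * x
    + 6 * (\<Sum>k = 2..n - 1. of_nat (n - k) * x ^ (3 * k - 2))
    + 2 * (\<Sum>k = 1..n - 1. of_nat (2 * n - 2 * k - 1) * x ^ (3 * k - 1))
    + 6 * (\<Sum>k = 1..n - 2. of_nat (n - k - 1) * x ^ (3 * k))"

lemma RHS_2: "RHS x 2 = 4 * x + 2 * x^2"
  by (simp add: RHS_def)


lemma e2: "(\<Sum>k = 1..m+2. of_nat (2*(m+3) - 2*k - 1) * x ^ (3 * k - 1)) = (\<Sum>k = 1..m+1. of_nat (2*(m+2) - 2*k - 1) * x ^ (3 * k - 1)) + 2 * A x 2 (Suc m) + x^(3*m+5)"
proof -
  have n: "m+2 = Suc (Suc m)" "m+1 = Suc m" "3*Suc(Suc m) - 1 = 3*m+5" by simp_all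
  show ?thesis
    unfolding n(1,2) using T2_step[where m=m and f="\<lambda>k. x ^ (3 * k - 1)", unfolded reidx2 n(3) n(1,2)] .
qed
lemma e1: "(\<Sum>k = 2..m+2. of_nat (m+3 - k) * x ^ (3 * k - 2)) = (\<Sum>k = 2..m+1. of_nat (m+2 - k) * x ^ (3 * k - 2)) + A x 4 (Suc m)"
proof -
  have n: "m+2 = Suc (Suc m)" "m+1 = Suc m" "m+3 = Suc (Suc (Suc m))" by simp_all
  show ?thesis
    using W_step[where a=2 and m="Suc m" and f="\<lambda>k. x ^ (3 * k - 2)"] reidx1[of x m] unfolding n by simp
qed
lemma e3: "(\<Sum>k = 1..m+1. of_nat (m+3 - k - 1) * x ^ (3 * k)) = (\<Sum>k = 1..m. of_nat (m+2 - k - 1) * x ^ (3 * k)) + A x 3 (Suc m)"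
proof -
  have n: "m+2 = Suc (Suc m)" "m+1 = Suc m" "m+3 = Suc (Suc (Suc m))" by simp_all
  have a: "(\<Sum>k = 1..Suc m. of_nat (Suc(Suc(Suc m)) - k - 1) * x ^ (3 * k)) = (\<Sum>k = 1..Suc m. of_nat (Suc (Suc m) - k) * x ^ (3 * k))"
    by simp
  have b: "(\<Sum>k = 1..m. of_nat (Suc (Suc m) - k - 1) * x ^ (3 * k)) = (\<Sum>k = 1..m. of_nat (Suc m - k) * x ^ (3 * k))"
    by simp
  show ?thesis
    unfolding n a b using W_step[where a=1 and m=m and f="\<lambda>k. x ^ (3 * k)"] reidx3[of x m] by simp
qed

lemma r3: "RHS x (m+3) = of_nat (4 * (m+2)) * x
    + 6 * (\<Sum>k = 2..m+2. of_nat (m+3 - k) * x ^ (3 * k - 2))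
    + 2 * (\<Sum>k = 1..m+2. of_nat (2*(m+3) - 2*k - 1) * x ^ (3 * k - 1))
    + 6 * (\<Sum>k = 1..m+1. of_nat (m+3 - k - 1) * x ^ (3 * k))"
proof -
  have n: "m+3-1 = m+2" "m+3-2 = m+1" by simp_all
  show ?thesis unfolding RHS_def n ..
qed
lemma r2: "RHS x (m+2) = of_nat (4 * (m+1)) * x
    + 6 * (\<Sum>k = 2..m+1. of_nat (m+2 - k) * x ^ (3 * k - 2))
    + 2 * (\<Sum>k = 1..m+1. of_nat (2*(m+2) - 2*k - 1) * x ^ (3 * k - 1))
    + 6 * (\<Sum>k = 1..m. of_nat (m+2 - k - 1) * x ^ (3 * k))"
proof -
  have n: "m+2-1 = m+1" "m+2-2 = m" by simp_all
  show ?thesis unfolding RHS_def n ..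
qed
lemma key: "6 * A x 4 (Suc m) + 2 * (2 * A x 2 (Suc m) + x^(3*m+5)) + 6 * A x 3 (Suc m)
     = 2 * (1+x)^2 * Er x (m+1) + 2*x^2"
  proof -
    have s: "A x 2 (Suc m) + x^(3*(Suc m)+2) = A x 5 (Suc m) + x^2" by (rule A_shift)
    have m3: "x * A x 3 (Suc m) = A x 4 (Suc m)" "x * A x 2 (Suc m) = A x 3 (Suc m)"
      "x * A x 4 (Suc m) = A x 5 (Suc m)"
      by (simp_all add: A_mult numeral_3_eq_3 numeral_2_eq_2 eval_nat_numeral)
    have "2 * (1+x)^2 * Er x (m+1) = 2 * (1 + 2*x + x*x) * (A x 3 (Suc m) + A x 2 (Suc m))"
      by (simp add: Er_A power2_eq_square algebra_simps)
    also have "\<dots> = 2 * A x 3 (Suc m) + 2 * A x 2 (Suc m) + 4 * (x * A x 3 (Suc m)) + 4 * (x * A x 2 (Suc m))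
        + 2 * (x * (x * A x 3 (Suc m))) + 2 * (x * (x * A x 2 (Suc m)))"
      by (simp add: algebra_simps)
    also have "\<dots> = 6 * A x 3 (Suc m) + 2 * A x 2 (Suc m) + 6 * A x 4 (Suc m) + 2 * A x 5 (Suc m)"
      by (simp add: m3 algebra_simps)
    finally have "2 * (1+x)^2 * Er x (m+1) = 6 * A x 3 (Suc m) + 2 * A x 2 (Suc m) + 6 * A x 4 (Suc m) + 2 * A x 5 (Suc m)" .
    moreover have e: "3*(Suc m)+2 = 3*m+5" by simp
    moreover have t: "2 * A x 2 (Suc m) + 2 * x^(3*m+5) = 2 * A x 5 (Suc m) + 2 * x^2"
      using arg_cong[OF s[unfolded e], of "\<lambda>t. 2*t"] by (simp add: algebra_simps del: Er.simps)
    ultimately show ?thesis by (simp add: algebra_simps del: Er.simps)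
  qed

lemma RHS_step': "RHS x (m+3) = RHS x (m+2) + 2 * (1+x)^2 * Er x (m+1) + 4*x + 2*x^2"
proof -
  have k: "2 * (1+x)^2 * Er x (m+1) = 6 * A x 4 (Suc m) + 2 * (2 * A x 2 (Suc m) + x^(3*m+5)) + 6 * A x 3 (Suc m) - 2*x^2"
    using key[of x m] by (simp add: algebra_simps del: Er.simps)
  have o: "(of_nat (4*(m+2)) :: 'a) = of_nat (4*(m+1)) + 4" by simp
  show ?thesis unfolding r3 r2 e1 e2 e3 o k
    by (simp add: algebra_simps del: Er.simps sum.cl_ivl_Suc)
qed

lemma PS_insert:
  fixes f :: "'v::linorder \<Rightarrow> 'v \<Rightarrow> 'a::comm_ring_1"
  assumes fin: "finite S" and w: "w \<notin> S" and sym: "\<And>a b. f a b = f b a"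
  shows "(\<Sum>(u,v)\<in>{(u,v). u \<in> insert w S \<and> v \<in> insert w S \<and> u < v}. f u v)
       = (\<Sum>(u,v)\<in>{(u,v). u \<in> S \<and> v \<in> S \<and> u < v}. f u v) + (\<Sum>a\<in>S. f a w)"
proof -
  let ?P = "{(u,v). u \<in> S \<and> v \<in> S \<and> u < v}"
  let ?L = "(\<lambda>a. (a,w)) ` {a\<in>S. a<w}"
  let ?R = "(\<lambda>a. (w,a)) ` {a\<in>S. w<a}"
  have eq: "{(u,v). u \<in> insert w S \<and> v \<in> insert w S \<and> u < v} = (?P \<union> ?L) \<union> ?R"
    by auto
  have finP: "finite ?P" by (rule finite_subset[of _ "S \<times> S"]) (auto simp: fin)
  have d1: "?P \<inter> ?L = {}" using w by auto
  have d2: "(?P \<union> ?L) \<inter> ?R = {}" using w by auto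
  have "(\<Sum>(u,v)\<in>(?P \<union> ?L) \<union> ?R. f u v) = (\<Sum>(u,v)\<in>?P. f u v) + (\<Sum>(u,v)\<in>?L. f u v) + (\<Sum>(u,v)\<in>?R. f u v)"
    using fin finP d1 d2 by (simp add: sum.union_disjoint)
  also have "(\<Sum>(u,v)\<in>?L. f u v) = (\<Sum>a\<in>{a\<in>S. a<w}. f a w)"
    by (subst sum.reindex) (auto simp: inj_on_def)
  also have "(\<Sum>(u,v)\<in>?R. f u v) = (\<Sum>a\<in>{a\<in>S. w<a}. f a w)"
    by (subst sum.reindex) (auto simp: inj_on_def sym)
  finally have A: "(\<Sum>(u,v)\<in>(?P \<union> ?L) \<union> ?R. f u v) = (\<Sum>(u,v)\<in>?P. f u v) + (\<Sum>a\<in>{a\<in>S. a<w}. f a w) + (\<Sum>a\<in>{a\<in>S. w<a}. f a w)" .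
  have B: "(\<Sum>a\<in>{a\<in>S. a<w}. f a w) + (\<Sum>a\<in>{a\<in>S. w<a}. f a w) = (\<Sum>a\<in>S. f a w)"
  proof -
    have "S = {a\<in>S. a<w} \<union> {a\<in>S. w<a}"
    proof (intro set_eqI iffI)
      fix a assume a: "a \<in> S"
      then have "a \<noteq> w" using w by auto
      then show "a \<in> {a\<in>S. a<w} \<union> {a\<in>S. w<a}" using a by (auto simp: neq_iff)
    qed auto
    then have "(\<Sum>a\<in>S. f a w) = (\<Sum>a\<in>{a\<in>S. a<w} \<union> {a\<in>S. w<a}. f a w)" by simp
    also have "\<dots> = (\<Sum>a\<in>{a\<in>S. a<w}. f a w) + (\<Sum>a\<in>{a\<in>S. w<a}. f a w)"
      using fin by (intro sum.union_disjoint) auto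
    finally show ?thesis by simp
  qed
  show ?thesis unfolding eq A B[symmetric] by (simp add: add.assoc)
qed

lemma Dn_sub: "Dn n \<subseteq> phen_V n" by (auto simp: Dn_def phen_V_def)
lemma Dn_fin: "finite (Dn n)"
  by (rule finite_subset[OF Dn_sub]) (simp add: phen_V_def)
lemma Dn_1: "Dn (Suc 0) = {}" by (auto simp: Dn_def)
lemma Dn_Suc: "1 \<le> n \<Longrightarrow> Dn (Suc n) = insert (Suc n,5) (insert (Suc n,4) (insert (n,2) (insert (n,1) (Dn n))))"
  by (auto simp: Dn_def)
lemma Dn_notin: "(n,1) \<notin> Dn n" "(n,2) \<notin> insert (n,1) (Dn n)"
  "(Suc n,4) \<notin> insert (n,2) (insert (n,1) (Dn n))"
  "(Suc n,5) \<notin> insert (Suc n,4) (insert (n,2) (insert (n,1) (Dn n)))"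
  by (auto simp: Dn_def)

lemma pd_sym: "pd a b = pd b a" by (auto simp: pd_def)

lemma pd_far: "pos v < pos w \<Longrightarrow> pd v w = (pos w - pos v) + (if upr v = upr w then 0 else 1)"
  by (simp add: pd_def)

lemma single:
  fixes x :: "'a::comm_ring_1"
  shows "1 \<le> n \<Longrightarrow> pos w = 3*n+2+c \<Longrightarrow> (\<Sum>a\<in>Dn n. x^(pd a w)) = (1+x) * x^c * Er x (n-1)"
proof (induction n arbitrary: c)
  case 0 then show ?case by simp
next
  case (Suc n)
  show ?case
  proof (cases "n = 0")
    case True then show ?thesis by (simp add: Dn_1)
  next
    case False
    then have n1: "1 \<le> n" by simp
    have ih: "(\<Sum>a\<in>Dn n. x^(pd a w)) = (1+x) * x^(c+3) * Er x (n-1)"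
      using Suc.IH[OF n1, of "c+3"] Suc.prems by simp
    have p1: "pd (n,1) w = c + 3 + (if upr w then 0 else 1)"
      using Suc.prems by (subst pd_far) (auto simp: pos_def upr_def)
    have p2: "pd (n,2) w = c + 3 + (if upr w then 1 else 0)"
      using Suc.prems by (subst pd_far) (auto simp: pos_def upr_def)
    have p4: "pd (Suc n,4) w = c + 2 + (if upr w then 1 else 0)"
      using Suc.prems by (subst pd_far) (auto simp: pos_def upr_def)
    have p5: "pd (Suc n,5) w = c + 2 + (if upr w then 0 else 1)"
      using Suc.prems by (subst pd_far) (auto simp: pos_def upr_def)
    have s: "(\<Sum>a\<in>Dn (Suc n). x^(pd a w)) = x^(pd (Suc n,5) w) + (x^(pd (Suc n,4) w) + (x^(pd (n,2) w) + (x^(pd (n,1) w) + (\<Sum>a\<in>Dn n. x^(pd a w)))))"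
      unfolding Dn_Suc[OF n1] using Dn_notin[of n] Dn_fin[of n] by simp
    have er: "Er x (Suc n - 1) = x^3 * Er x (n-1) + x^3 + x^2"
      using n1 by (cases n) auto
    have "x^(pd (Suc n,5) w) + x^(pd (Suc n,4) w) + x^(pd (n,2) w) + x^(pd (n,1) w) = (1+x) * (x^(c+2) + x^(c+3))"
      unfolding p1 p2 p4 p5 by (cases "upr w") (simp_all add: algebra_simps eval_nat_numeral)
    then show ?thesis unfolding s ih er
      by (simp add: algebra_simps power_add power2_eq_square eval_nat_numeral del: Er.simps)
  qed
qed

definition Q :: "'a::comm_ring_1 \<Rightarrow> nat \<Rightarrow> 'a" where
  "Q x n = (\<Sum>(u,v)\<in>{(u,v). u \<in> Dn n \<and> v \<in> Dn n \<and> u < v}. x ^ pd u v)"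

lemma Q_step:
  assumes n1: "1 \<le> n"
  shows "Q x (Suc n) = Q x n + 2 * (1+x)^2 * Er x (n-1) + 4*x + 2*x^2"
proof -
  let ?f = "\<lambda>u v. x ^ pd u v"
  have sym: "\<And>a b. ?f a b = ?f b a" by (simp add: pd_sym)
  define S0 where "S0 = Dn n"
  define S1 where "S1 = insert (n,1) S0"
  define S2 where "S2 = insert (n,2) S1"
  define S3 where "S3 = insert (Suc n,4) S2"
  have D: "Dn (Suc n) = insert (Suc n,5) S3" unfolding S0_def S1_def S2_def S3_def by (rule Dn_Suc[OF n1])
  have f0: "finite S0" unfolding S0_def by (rule Dn_fin)
  have f1: "finite S1" "finite S2" "finite S3" using f0 unfolding S1_def S2_def S3_def by auto
  have nm: "(n,1) \<notin> S0" "(n,2) \<notin> S1" "(Suc n,4) \<notin> S2" "(Suc n,5) \<notin> S3"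
    using Dn_notin[of n] unfolding S0_def S1_def S2_def S3_def by auto
  let ?Q = "\<lambda>S. (\<Sum>(u,v)\<in>{(u,v). u \<in> S \<and> v \<in> S \<and> u < v}. ?f u v)"
  have q: "Q x (Suc n) = ?Q S0 + (\<Sum>a\<in>S0. ?f a (n,1)) + (\<Sum>a\<in>S1. ?f a (n,2))
     + (\<Sum>a\<in>S2. ?f a (Suc n,4)) + (\<Sum>a\<in>S3. ?f a (Suc n,5))"
    unfolding Q_def D
    using PS_insert[OF f1(3) nm(4) sym] PS_insert[OF f1(2) nm(3) sym] PS_insert[OF f1(1) nm(2) sym]
      PS_insert[OF f0 nm(1) sym]
    unfolding S3_def[symmetric] S2_def[symmetric] S1_def[symmetric] by simp
  have q0: "?Q S0 = Q x n" unfolding Q_def S0_def ..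
  have sb: "(\<Sum>a\<in>S0. ?f a (n,1)) = (1+x) * Er x (n-1)"
    using single[OF n1, of "(n,1)" 0 x] unfolding S0_def by (simp add: pos_def)
  have sc: "(\<Sum>a\<in>S1. ?f a (n,2)) = x + (1+x) * Er x (n-1)"
  proof -
    have "(\<Sum>a\<in>S1. ?f a (n,2)) = ?f (n,1) (n,2) + (\<Sum>a\<in>S0. ?f a (n,2))"
      unfolding S1_def using f0 nm by simp
    moreover have "pd (n,1) (n,2) = 1" by (simp add: pd_def pos_def upr_def)
    moreover have "(\<Sum>a\<in>S0. ?f a (n,2)) = (1+x) * Er x (n-1)"
      using single[OF n1, of "(n,2)" 0 x] unfolding S0_def by (simp add: pos_def)
    ultimately show ?thesis by simp
  qed
  have se: "(\<Sum>a\<in>S2. ?f a (Suc n,4)) = x + x^2 + (1+x) * x * Er x (n-1)"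
  proof -
    have "(\<Sum>a\<in>S2. ?f a (Suc n,4)) = ?f (n,2) (Suc n,4) + (?f (n,1) (Suc n,4) + (\<Sum>a\<in>S0. ?f a (Suc n,4)))"
      unfolding S2_def S1_def using f0 nm unfolding S1_def by simp
    moreover have "pd (n,2) (Suc n,4) = 1" "pd (n,1) (Suc n,4) = 2" by (simp_all add: pd_def pos_def upr_def)
    moreover have "(\<Sum>a\<in>S0. ?f a (Suc n,4)) = (1+x) * x * Er x (n-1)"
      using single[OF n1, of "(Suc n,4)" 1 x] unfolding S0_def by (simp add: pos_def)
    ultimately show ?thesis by (simp add: power2_eq_square)
  qed
  have sf: "(\<Sum>a\<in>S3. ?f a (Suc n,5)) = x + x + x^2 + (1+x) * x * Er x (n-1)"
  proof -
    have "(\<Sum>a\<in>S3. ?f a (Suc n,5)) = ?f (Suc n,4) (Suc n,5) + (?f (n,2) (Suc n,5) + (?f (n,1) (Suc n,5) + (\<Sum>a\<in>S0. ?f a (Suc n,5))))"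
      unfolding S3_def S2_def S1_def using f0 nm unfolding S1_def S2_def by simp
    moreover have "pd (Suc n,4) (Suc n,5) = 1" "pd (n,2) (Suc n,5) = 2" "pd (n,1) (Suc n,5) = 1"
      by (simp_all add: pd_def pos_def upr_def)
    moreover have "(\<Sum>a\<in>S0. ?f a (Suc n,5)) = (1+x) * x * Er x (n-1)"
      using single[OF n1, of "(Suc n,5)" 1 x] unfolding S0_def by (simp add: pos_def)
    ultimately show ?thesis by (simp add: power2_eq_square)
  qed
  show ?thesis unfolding q q0 sb sc se sf
    by (simp add: algebra_simps power2_eq_square del: Er.simps)
qed

lemma Q_1: "Q x (Suc 0) = 0" by (simp add: Q_def Dn_1)

lemma Q_RHS: "2 \<le> n \<Longrightarrow> Q x n = RHS x n"
proof (induction n rule: nat_induct_at_least)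
  case base
  have "Q x 2 = Q x (Suc 1)" by (simp add: numeral_2_eq_2)
  also have "\<dots> = 4 * x + 2 * x^2" using Q_step[of 1 x] by (simp add: Q_1)
  finally show ?case by (simp add: RHS_2)
next
  case (Suc n)
  then obtain m where m: "n = m + 2" by (metis add.commute le_Suc_ex)
  have "Q x (Suc n) = Q x n + 2 * (1+x)^2 * Er x (n-1) + 4*x + 2*x^2" using Q_step[of n x] Suc by simp
  also have "\<dots> = RHS x (m+3)" using RHS_step'[of x m] Suc.IH m by (simp add: numeral_3_eq_3 numeral_2_eq_2 del: Er.simps)
  finally show ?case using m by (simp add: numeral_3_eq_3 numeral_2_eq_2)
qed

theorem theorem2p3:
  fixes n :: nat and x :: "'a::comm_ring_1"
  assumes "n \<ge> 2"
  shows "base_poly (phen_V n) (phen_E n) 3 x =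
    of_nat (4 * (n - 1)) * x
    + 6 * (\<Sum>k = 2..n - 1. of_nat (n - k) * x ^ (3 * k - 2))
    + 2 * (\<Sum>k = 1..n - 1. of_nat (2 * n - 2 * k - 1) * x ^ (3 * k - 1))
    + 6 * (\<Sum>k = 1..n - 2. of_nat (n - k - 1) * x ^ (3 * k))"
proof -
  have set: "{(u, v). u \<in> phen_V n \<and> v \<in> phen_V n \<and> u < v \<and> degree (phen_V n) (phen_E n) u = 3 \<and> degree (phen_V n) (phen_E n) v = 3}
     = {(u,v). u \<in> Dn n \<and> v \<in> Dn n \<and> u < v}"
    using deg3[of _ n] Dn_sub[of n] by blast
  have "base_poly (phen_V n) (phen_E n) 3 x = Q x n"
    unfolding base_poly_def set Q_def
  proof (rule sum.cong)
    fix p assume "p \<in> {(u,v). u \<in> Dn n \<and> v \<in> Dn n \<and> u < v}"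
    then obtain u v where p: "p = (u,v)" "u \<in> phen_V n" "v \<in> phen_V n" using Dn_sub[of n] by blast
    show "(case p of (u, v) \<Rightarrow> x ^ gdist (phen_E n) u v) = (case p of (u, v) \<Rightarrow> x ^ pd u v)"
      using p by (simp add: gdist_pd)
  qed simp
  also have "\<dots> = RHS x n" by (rule Q_RHS[OF assms])
  finally show ?thesis unfolding RHS_def .
qed

end
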